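(* Let $H=(V,E)$ be a $3$-uniform quasi-eulerian hypergraph in which every vertex has odd degree. Then $|V|\le |E|$.
   Context: A hypergraph $H=(V,E)$ consists of a finite nonempty vertex set $V$, a finite edge set $E$ disjoint from $V$, and an incidence function assigning to each edge $e\in E$ a subset of $V$ (also denoted $e$); distinct edges may have the same vertex set. $H$ is $3$-uniform if $|e|=3$ for all $e\in E$. The degree of a vertex is the number of edges containing it. A walk is a sequence $W=v_0e_1v_1e_2\cdots e_kv_k$ with $v_i\in V$, $e_i\in E$, such that for each $i$, $v_{i-1}\ne v_i$ and $v_{i-1},v_i\in e_i$; the $v_i$ are its anchors. $W$ is closed if $k\ge 2$ and $v_0=v_k$; it is a strict trail if $e_1,\dots,e_k$ are pairwise distinct. An Euler family of $H$ is a family of closed strict trails such that every edge of $H$ lies in exactly one trail and no two trails have a common anchor; $H$ is quasi-eulerian if it has one. *)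

theory Defs
  imports Main
begin

text \<open>A hypergraph: vertex set V, edge set E (edges are of a separate type, hence
  disjoint from V), and an incidence function inc assigning to each edge a set of vertices.\<close>
definition hypergraph :: "'v set \<Rightarrow> 'e set \<Rightarrow> ('e \<Rightarrow> 'v set) \<Rightarrow> bool" where
  "hypergraph V E inc \<longleftrightarrow> finite V \<and> V \<noteq> {} \<and> finite E \<and> (\<forall>e\<in>E. inc e \<subseteq> V)"

definition uniform3 :: "'e set \<Rightarrow> ('e \<Rightarrow> 'v set) \<Rightarrow> bool" where
  "uniform3 E inc \<longleftrightarrow> (\<forall>e\<in>E. card (inc e) = 3)"

definition hdegree :: "'e set \<Rightarrow> ('e \<Rightarrow> 'v set) \<Rightarrow> 'v \<Rightarrow> nat" where
  "hdegree E inc v = card {e\<in>E. v \<in> inc e}"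

text \<open>A walk v0 e1 v1 ... ek vk is represented by the anchor list [v0,...,vk]
  and the edge list [e1,...,ek].\<close>
definition is_walk :: "'v set \<Rightarrow> 'e set \<Rightarrow> ('e \<Rightarrow> 'v set) \<Rightarrow> 'v list \<Rightarrow> 'e list \<Rightarrow> bool" where
  "is_walk V E inc vs es \<longleftrightarrow>
     length vs = length es + 1 \<and> set vs \<subseteq> V \<and> set es \<subseteq> E \<and>
     (\<forall>i < length es. vs ! i \<noteq> vs ! (i+1) \<and> vs ! i \<in> inc (es ! i) \<and> vs ! (i+1) \<in> inc (es ! i))"

definition closed_strict_trail :: "'v set \<Rightarrow> 'e set \<Rightarrow> ('e \<Rightarrow> 'v set) \<Rightarrow> 'v list \<Rightarrow> 'e list \<Rightarrow> bool" where
  "closed_strict_trail V E inc vs es \<longleftrightarrow>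
     is_walk V E inc vs es \<and> length es \<ge> 2 \<and> hd vs = last vs \<and> distinct es"

definition euler_family :: "'v set \<Rightarrow> 'e set \<Rightarrow> ('e \<Rightarrow> 'v set) \<Rightarrow> ('v list \<times> 'e list) set \<Rightarrow> bool" where
  "euler_family V E inc F \<longleftrightarrow>
     (\<forall>(vs, es)\<in>F. closed_strict_trail V E inc vs es) \<and>
     (\<forall>e\<in>E. \<exists>!W. W \<in> F \<and> e \<in> set (snd W)) \<and>
     (\<forall>W1\<in>F. \<forall>W2\<in>F. W1 \<noteq> W2 \<longrightarrow> set (fst W1) \<inter> set (fst W2) = {})"

definition quasi_eulerian :: "'v set \<Rightarrow> 'e set \<Rightarrow> ('e \<Rightarrow> 'v set) \<Rightarrow> bool" where
  "quasi_eulerian V E inc \<longleftrightarrow> (\<exists>F. euler_family V E inc F)"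

end

theory Submission
  imports Defs
begin

lemma trail_even:
  assumes "closed_strict_trail V E inc vs es"
  shows "even (card {i. i < length es \<and> (vs!i = v \<or> vs!Suc i = v)})"
proof -
  let ?k = "length es"
  from assms have len: "length vs = ?k + 1" and k2: "?k \<ge> 2" and hl: "hd vs = last vs"
    and nd: "\<forall>i<?k. vs!i \<noteq> vs!Suc i"
    by (auto simp: closed_strict_trail_def is_walk_def)
  have ne: "vs \<noteq> []" using len by auto
  have vs0k: "vs!0 = vs!?k" using hl len ne by (simp add: hd_conv_nth last_conv_nth)
  define J0 where "J0 = {i. i < ?k \<and> vs!i = v}"
  define J1 where "J1 = {i. i < ?k \<and> vs!Suc i = v}"
  define B where "B = {j. j \<le> ?k \<and> vs!j = v}"
  have eq: "{i. i < length es \<and> (vs!i = v \<or> vs!Suc i = v)} = J0 \<union> J1"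
    by (auto simp: J0_def J1_def)
  have disj: "J0 \<inter> J1 = {}" using nd by (auto simp: J0_def J1_def)
  have f0: "finite J0" and f1: "finite J1" by (auto simp: J0_def J1_def)
  have fB: "finite B" by (auto simp: B_def)
  have c1: "card J1 = card (Suc ` J1)" by (simp add: card_image)
  have SJ1: "Suc ` J1 = {j. 0 < j \<and> j \<le> ?k \<and> vs!j = v}"
  proof
    show "Suc ` J1 \<subseteq> {j. 0 < j \<and> j \<le> ?k \<and> vs!j = v}" by (auto simp: J1_def)
    show "{j. 0 < j \<and> j \<le> ?k \<and> vs!j = v} \<subseteq> Suc ` J1"
    proof
      fix j assume "j \<in> {j. 0 < j \<and> j \<le> ?k \<and> vs!j = v}"
      then have "j = Suc (j - 1)" "j - 1 \<in> J1" by (auto simp: J1_def)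
      then show "j \<in> Suc ` J1" by (metis imageI)
    qed
  qed
  have "card J0 = card (Suc ` J1)"
  proof (cases "vs!0 = v")
    case True
    then have a: "J0 = B - {?k}" using vs0k by (auto simp: J0_def B_def)
    have b: "Suc ` J1 = B - {0}" using SJ1 by (auto simp: B_def)
    have "?k \<in> B" "0 \<in> B" using True vs0k by (auto simp: B_def)
    then show ?thesis using a b fB by simp
  next
    case False
    then have a: "J0 = B" using vs0k by (auto simp: J0_def B_def le_less)
    have b: "Suc ` J1 = B" using SJ1 False by (auto simp: B_def)
    show ?thesis using a b by simp
  qed
  then have "card (J0 \<union> J1) = 2 * card J1"
    using card_Un_disjoint[OF f0 f1 disj] c1 by simp
  then show ?thesis using eq by simp
qed

theorem corollary2p40:
  fixes V :: "'v set" and E :: "'e set" and inc :: "'e \<Rightarrow> 'v set"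
  assumes "hypergraph V E inc"
    and "uniform3 E inc"
    and "quasi_eulerian V E inc"
    and "\<forall>v\<in>V. odd (hdegree E inc v)"
  shows "card V \<le> card E"
proof -
  from assms(3) obtain F where F: "euler_family V E inc F" by (auto simp: quasi_eulerian_def)
  have trails: "\<And>vs es. (vs, es) \<in> F \<Longrightarrow> closed_strict_trail V E inc vs es"
    using F by (auto simp: euler_family_def)
  have uniq: "\<And>e. e \<in> E \<Longrightarrow> \<exists>!W. W \<in> F \<and> e \<in> set (snd W)"
    using F by (auto simp: euler_family_def)
  have disj: "\<And>W1 W2. W1 \<in> F \<Longrightarrow> W2 \<in> F \<Longrightarrow> W1 \<noteq> W2 \<Longrightarrow> set (fst W1) \<inter> set (fst W2) = {}"
    using F by (auto simp: euler_family_def)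
  have finE: "finite E" and finV: "finite V" using assms(1) by (auto simp: hypergraph_def)
  define anch where "anch v e \<longleftrightarrow> (\<exists>(vs,es)\<in>F. \<exists>i<length es. es!i = e \<and> (vs!i = v \<or> vs!Suc i = v))" for v e
  have edge: "card (inc e - {v. anch v e}) = 1" if eE: "e \<in> E" for e
  proof -
    obtain W where W: "W \<in> F" "e \<in> set (snd W)" and Wu: "\<And>W'. W' \<in> F \<Longrightarrow> e \<in> set (snd W') \<Longrightarrow> W' = W"
      using uniq[OF eE] by blast
    obtain vs es where Weq: "W = (vs, es)" by (cases W)
    have tr: "closed_strict_trail V E inc vs es" using trails W Weq by simp
    from W Weq obtain i where i: "i < length es" "es!i = e" by (auto simp: in_set_conv_nth)
    have dist: "distinct es" using tr by (simp add: closed_strict_trail_def)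
    have wk: "is_walk V E inc vs es" using tr by (simp add: closed_strict_trail_def)
    have nd: "vs!i \<noteq> vs!Suc i" "vs!i \<in> inc e" "vs!Suc i \<in> inc e"
      using wk i by (auto simp: is_walk_def)
    have A: "{v. anch v e} = {vs!i, vs!Suc i}"
    proof
      show "{vs!i, vs!Suc i} \<subseteq> {v. anch v e}"
        using W Weq i unfolding anch_def by fastforce
      show "{v. anch v e} \<subseteq> {vs!i, vs!Suc i}"
      proof
        fix v assume "v \<in> {v. anch v e}"
        then obtain vs' es' j where m: "(vs', es') \<in> F" "j < length es'" "es'!j = e"
          "vs'!j = v \<or> vs'!Suc j = v" unfolding anch_def by blast
        then have "(vs', es') = W" using Wu[of "(vs',es')"] by (auto simp: in_set_conv_nth)
        then have "vs' = vs" "es' = es" using Weq by auto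
        with m i dist have "j = i" by (metis nth_eq_iff_index_eq)
        with m \<open>vs' = vs\<close> show "v \<in> {vs!i, vs!Suc i}" by auto
      qed
    qed
    have c3: "card (inc e) = 3" using assms(2) eE by (simp add: uniform3_def)
    then have "finite (inc e)" by (metis card.infinite zero_neq_numeral)
    then have "card (inc e - {vs!i, vs!Suc i}) = card (inc e) - card {vs!i, vs!Suc i}"
      using nd by (intro card_Diff_subset) auto
    then show ?thesis using A c3 nd by simp
  qed
  have vert: "\<exists>e\<in>E. v \<in> inc e \<and> \<not> anch v e" if vV: "v \<in> V" for v
  proof -
    define D where "D = {e\<in>E. v \<in> inc e}"
    define A where "A = {e. anch v e}"
    have AD: "A \<subseteq> D"
    proof
      fix e assume "e \<in> A"
      then obtain vs es i where m: "(vs, es) \<in> F" "i < length es" "es!i = e"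
          "vs!i = v \<or> vs!Suc i = v" unfolding A_def anch_def by blast
      have "is_walk V E inc vs es" using trails[OF m(1)] by (simp add: closed_strict_trail_def)
      with m nth_mem[OF m(2)] show "e \<in> D" unfolding D_def is_walk_def by auto
    qed
    have fD: "finite D" using finE by (simp add: D_def)
    have oD: "odd (card D)" using assms(4) vV by (simp add: hdegree_def D_def)
    have eA: "even (card A)"
    proof (cases "\<exists>W\<in>F. v \<in> set (fst W)")
      case False
      have "A = {}"
      proof (rule ccontr)
        assume "A \<noteq> {}"
        then obtain e where "e \<in> A" by blast
        then obtain vs es i where m: "(vs, es) \<in> F" "i < length es" "es!i = e"
            "vs!i = v \<or> vs!Suc i = v" unfolding A_def anch_def by blast
        have "length vs = length es + 1" using trails[OF m(1)]
          by (simp add: closed_strict_trail_def is_walk_def)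
        then have "v \<in> set vs" using m nth_mem[of i vs] nth_mem[of "Suc i" vs] by auto
        then show False using False m(1) by force
      qed
      then show ?thesis by simp
    next
      case True
      then obtain vs es where Wm: "(vs, es) \<in> F" "v \<in> set vs" by force
      have tr: "closed_strict_trail V E inc vs es" using trails Wm by simp
      have dist: "distinct es" using tr by (simp add: closed_strict_trail_def)
      define I where "I = {i. i < length es \<and> (vs!i = v \<or> vs!Suc i = v)}"
      have "A = (nth es) ` I"
      proof
        show "(nth es) ` I \<subseteq> A" using Wm unfolding A_def I_def anch_def by fastforce
        show "A \<subseteq> (nth es) ` I"
        proof
          fix e assume "e \<in> A"
          then obtain vs' es' i where m: "(vs', es') \<in> F" "i < length es'" "es'!i = e"
              "vs'!i = v \<or> vs'!Suc i = v" unfolding A_def anch_def by blast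
          have "length vs' = length es' + 1" using trails[OF m(1)]
            by (simp add: closed_strict_trail_def is_walk_def)
          then have "v \<in> set vs'" using m nth_mem[of i vs'] nth_mem[of "Suc i" vs'] by auto
          then have "(vs', es') = (vs, es)" using disj[OF m(1) Wm(1)] Wm(2) by auto
          then show "e \<in> (nth es) ` I" using m unfolding I_def by auto
        qed
      qed
      moreover have "inj_on (nth es) I" using dist
        by (intro inj_on_nth) (auto simp: I_def)
      ultimately have "card A = card I" by (simp add: card_image)
      then show ?thesis using trail_even[OF tr, of v] by (simp add: I_def)
    qed
    have "card A \<le> card D" using AD fD by (simp add: card_mono)
    moreover have "card A \<noteq> card D" using oD eA by auto
    ultimately have "card (D - A) > 0" using card_Diff_subset[OF _ AD] fD AD
      by (metis finite_subset zero_less_diff le_neq_implies_less)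
    then obtain e where "e \<in> D - A" by (metis card.empty ex_in_conv less_irrefl)
    then show ?thesis unfolding D_def A_def by auto
  qed
  have finI: "\<And>e. e \<in> E \<Longrightarrow> finite (inc e - {v. anch v e})"
    using assms(1) finV by (meson Diff_subset finite_subset hypergraph_def)
  define S where "S = Sigma E (\<lambda>e. inc e - {v. anch v e})"
  have finS: "finite S" unfolding S_def using finE assms(1)
    using finI by (intro finite_SigmaI) auto
  have "card S = (\<Sum>e\<in>E. card (inc e - {v. anch v e}))"
    unfolding S_def using finE assms(1)
    using finI by (intro card_SigmaI) auto
  also have "\<dots> = (\<Sum>e\<in>E. 1)" using edge by simp
  finally have cS: "card S = card E" by simp
  have "V \<subseteq> snd ` S"
  proof
    fix v assume "v \<in> V"
    then obtain e where "e \<in> E" "v \<in> inc e" "\<not> anch v e" using vert by blast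
    then have "(e, v) \<in> S" by (simp add: S_def)
    then show "v \<in> snd ` S" by force
  qed
  then have "card V \<le> card (snd ` S)" using finS by (simp add: card_mono)
  also have "\<dots> \<le> card S" using finS by (rule card_image_le)
  finally show ?thesis using cS by simp
qed

end
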